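(* Let $\tfrac12<H<1$ and, for $x,y\ge0$, $R(x,y)=\tfrac12(x^{2H}+y^{2H}-|x-y|^{2H})$. There is a constant $0<K<\infty$ such that for every $T>1$, \[\int_{[\frac1T,1]^4}(xyuv)^{-2H}R(x,y)\,R(u,v)\,|x-u|^{2H-2}|y-v|^{2H-2}\,dx\,dy\,du\,dv\le K\log T.\] *)

theory Defs
  imports "HOL-Analysis.Analysis"
begin

definition fbm_cov :: "real \<Rightarrow> real \<Rightarrow> real \<Rightarrow> real" where
  "fbm_cov H x y = (x powr (2*H) + y powr (2*H) - \<bar>x - y\<bar> powr (2*H)) / 2"

end

theory Submission
  imports Defs
begin


lemma P0:
  fixes e x :: real assumes "e > -1" "x \<ge> 0"
  shows "(\<integral>\<^sup>+u. ennreal (u powr e) * indicator {0..x} u \<partial>lborel) = ennreal (x powr (e+1) / (e+1))"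
  by (rule nn_integral_has_integral_lebesgue'[OF _ has_integral_powr_from_0[OF assms]]) simp

lemma Pinf:
  fixes r y :: real assumes "r < -1" "y > 0"
  shows "(\<integral>\<^sup>+v. ennreal (v powr r) * indicator {y..} v \<partial>lborel) = ennreal (-(y powr (r+1)) / (r+1))"
  by (rule nn_integral_has_integral_lebesgue'[OF _ has_integral_powr_to_inf[OF assms]]) simp

lemma Pref:
  fixes e x :: real assumes "e > -1" "x \<ge> 0"
  shows "(\<integral>\<^sup>+u. ennreal (\<bar>x - u\<bar> powr e) * indicator {0..x} u \<partial>lborel) = ennreal (x powr (e+1) / (e+1))"
proof -
  have "(\<integral>\<^sup>+u. ennreal (\<bar>x - u\<bar> powr e) * indicator {0..x} u \<partial>lborel)
     = ennreal \<bar>-1\<bar> * (\<integral>\<^sup>+w. ennreal (\<bar>x - (x + (-1) * w)\<bar> powr e) * indicator {0..x} (x + (-1) * w) \<partial>lborel)"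
    by (rule nn_integral_real_affine) auto
  also have "\<dots> = (\<integral>\<^sup>+w. ennreal (w powr e) * indicator {0..x} w \<partial>lborel)"
    by (auto intro!: nn_integral_cong split: split_indicator)
  also have "\<dots> = ennreal (x powr (e+1) / (e+1))" by (rule P0[OF assms])
  finally show ?thesis .
qed

lemma Pshift:
  fixes e y :: real assumes "e > -1" "y \<ge> 0"
  shows "(\<integral>\<^sup>+v. ennreal (\<bar>y - v\<bar> powr e) * indicator {y..2*y} v \<partial>lborel) = ennreal (y powr (e+1) / (e+1))"
proof -
  have "(\<integral>\<^sup>+v. ennreal (\<bar>y - v\<bar> powr e) * indicator {y..2*y} v \<partial>lborel)
     = ennreal \<bar>1\<bar> * (\<integral>\<^sup>+w. ennreal (\<bar>y - (y + 1 * w)\<bar> powr e) * indicator {y..2*y} (y + 1 * w) \<partial>lborel)"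
    by (rule nn_integral_real_affine) auto
  also have "\<dots> = (\<integral>\<^sup>+w. ennreal (w powr e) * indicator {0..y} w \<partial>lborel)"
    by (auto intro!: nn_integral_cong split: split_indicator)
  also have "\<dots> = ennreal (y powr (e+1) / (e+1))" by (rule P0[OF assms])
  finally show ?thesis .
qed




lemma sets_lb2: "sets (lborel :: (real\<times>real) measure) = sets (borel \<Otimes>\<^sub>M borel)"
  by (metis borel_prod sets_lborel)

lemma meas_b3: "f \<in> borel_measurable ((borel::real measure) \<Otimes>\<^sub>M ((borel::real measure) \<Otimes>\<^sub>M (borel::real measure))) \<Longrightarrow> f \<in> borel_measurable (borel \<Otimes>\<^sub>M borel)"
  by (metis borel_prod)

lemma meas_lb22:
  assumes "f \<in> borel_measurable ((borel \<Otimes>\<^sub>M borel) \<Otimes>\<^sub>M (borel \<Otimes>\<^sub>M borel))"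
  shows "(f::(real\<times>real)\<times>(real\<times>real) \<Rightarrow> ennreal) \<in> borel_measurable (lborel \<Otimes>\<^sub>M lborel)"
  using assms by (subst measurable_cong_sets[OF sets_pair_measure_cong[OF sets_lb2 sets_lb2] refl])

lemma meas_lb2:
  assumes "f \<in> borel_measurable (borel \<Otimes>\<^sub>M borel)"
  shows "(f::(real\<times>real) \<Rightarrow> ennreal) \<in> borel_measurable lborel"
  using assms by (subst measurable_cong_sets[OF sets_lb2 refl])

lemma split2:
  fixes f :: "'a::euclidean_space \<times> 'b::euclidean_space \<Rightarrow> ennreal"
  assumes f: "f \<in> borel_measurable (borel \<Otimes>\<^sub>M borel)"
  shows "(\<integral>\<^sup>+p. f p \<partial>lborel) = (\<integral>\<^sup>+x. \<integral>\<^sup>+y. f (x,y) \<partial>lborel \<partial>lborel)"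
proof -
  have f': "f \<in> borel_measurable (lborel \<Otimes>\<^sub>M lborel)"
    using f by (simp add: measurable_cong_sets[OF sets_pair_measure_cong[OF sets_lborel sets_lborel] refl])
  have "(\<integral>\<^sup>+p. f p \<partial>lborel) = (\<integral>\<^sup>+p. f p \<partial>(lborel \<Otimes>\<^sub>M lborel))"
    by (simp add: lborel_prod)
  also have "\<dots> = (\<integral>\<^sup>+x. \<integral>\<^sup>+y. f (x,y) \<partial>lborel \<partial>lborel)"
    by (rule lborel.nn_integral_fst[symmetric, OF f'])
  finally show ?thesis .
qed

type_synonym r4 = "real \<times> real \<times> real \<times> real"
abbreviation "B4 \<equiv> (borel::real measure) \<Otimes>\<^sub>M (borel::real measure) \<Otimes>\<^sub>M (borel::real measure) \<Otimes>\<^sub>M (borel::real measure)"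

lemma iter4:
  fixes k :: "r4 \<Rightarrow> ennreal"
  assumes [measurable]: "k \<in> borel_measurable B4"
  shows "(\<integral>\<^sup>+p. k p \<partial>lborel) = (\<integral>\<^sup>+x. \<integral>\<^sup>+y. \<integral>\<^sup>+u. \<integral>\<^sup>+v. k (x,y,u,v) \<partial>lborel \<partial>lborel \<partial>lborel \<partial>lborel)"
proof -
  have "(\<integral>\<^sup>+p. k p \<partial>lborel) = (\<integral>\<^sup>+x. \<integral>\<^sup>+w. k (x,w) \<partial>lborel \<partial>lborel)"
    by (rule split2) (use assms in \<open>simp add: borel_prod\<close>)
  also have "\<dots> = (\<integral>\<^sup>+x. \<integral>\<^sup>+y. \<integral>\<^sup>+z. k (x,y,z) \<partial>lborel \<partial>lborel \<partial>lborel)"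
    by (intro nn_integral_cong split2 meas_b3) measurable
  also have "\<dots> = (\<integral>\<^sup>+x. \<integral>\<^sup>+y. \<integral>\<^sup>+u. \<integral>\<^sup>+v. k (x,y,u,v) \<partial>lborel \<partial>lborel \<partial>lborel \<partial>lborel)"
    by (intro nn_integral_cong split2) simp
  finally show ?thesis .
qed

lemma iter22:
  fixes k :: "r4 \<Rightarrow> ennreal"
  assumes [measurable]: "k \<in> borel_measurable B4"
  shows "(\<integral>\<^sup>+p. k p \<partial>lborel) = (\<integral>\<^sup>+(w::real\<times>real). \<integral>\<^sup>+(z::real\<times>real). k (fst w, snd w, fst z, snd z) \<partial>lborel \<partial>lborel)"
proof -
  have m: "(\<lambda>(w::real\<times>real,z::real\<times>real). k (fst w, snd w, fst z, snd z)) \<in> borel_measurable (lborel \<Otimes>\<^sub>M lborel)"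
    by (rule meas_lb22) measurable
  have "(\<integral>\<^sup>+(w::real\<times>real). \<integral>\<^sup>+(z::real\<times>real). k (fst w, snd w, fst z, snd z) \<partial>lborel \<partial>lborel)
     = (\<integral>\<^sup>+x. \<integral>\<^sup>+y. \<integral>\<^sup>+(z::real\<times>real). k (x, y, fst z, snd z) \<partial>lborel \<partial>lborel \<partial>lborel)"
    by (subst split2) (use lborel.borel_measurable_nn_integral[OF m] in \<open>simp_all add: borel_prod\<close>)
  also have "\<dots> = (\<integral>\<^sup>+x. \<integral>\<^sup>+y. \<integral>\<^sup>+u. \<integral>\<^sup>+v. k (x,y,u,v) \<partial>lborel \<partial>lborel \<partial>lborel \<partial>lborel)"
    by (intro nn_integral_cong, subst split2) simp_all
  finally show ?thesis by (simp add: iter4)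
qed

lemma inv_tau:
  fixes k :: "r4 \<Rightarrow> ennreal"
  assumes [measurable]: "k \<in> borel_measurable B4"
  shows "(\<integral>\<^sup>+p. k (case p of (x,y,u,v) \<Rightarrow> (u,v,x,y)) \<partial>lborel) = (\<integral>\<^sup>+p. k p \<partial>lborel)"
proof -
  have "(\<integral>\<^sup>+p. k (case p of (x,y,u,v) \<Rightarrow> (u,v,x,y)) \<partial>lborel)
     = (\<integral>\<^sup>+(w::real\<times>real). \<integral>\<^sup>+(z::real\<times>real). k (fst z, snd z, fst w, snd w) \<partial>lborel \<partial>lborel)"
    by (subst iter22) (simp_all add: case_prod_beta)
  also have "\<dots> = (\<integral>\<^sup>+(z::real\<times>real). \<integral>\<^sup>+(w::real\<times>real). k (fst z, snd z, fst w, snd w) \<partial>lborel \<partial>lborel)"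
    by (rule lborel_pair.Fubini', rule meas_lb22) measurable
  also have "\<dots> = (\<integral>\<^sup>+p. k p \<partial>lborel)"
    by (subst iter22) simp_all
  finally show ?thesis .
qed

lemma inv_sigma:
  fixes k :: "r4 \<Rightarrow> ennreal"
  assumes [measurable]: "k \<in> borel_measurable B4"
  shows "(\<integral>\<^sup>+p. k (case p of (x,y,u,v) \<Rightarrow> (y,x,v,u)) \<partial>lborel) = (\<integral>\<^sup>+p. k p \<partial>lborel)"
proof -
  have "(\<integral>\<^sup>+p. k (case p of (x,y,u,v) \<Rightarrow> (y,x,v,u)) \<partial>lborel)
     = (\<integral>\<^sup>+x. \<integral>\<^sup>+y. \<integral>\<^sup>+u. \<integral>\<^sup>+v. k (y,x,v,u) \<partial>lborel \<partial>lborel \<partial>lborel \<partial>lborel)"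
    by (subst iter4) (simp_all add: case_prod_beta)
  also have "\<dots> = (\<integral>\<^sup>+x. \<integral>\<^sup>+y. \<integral>\<^sup>+v. \<integral>\<^sup>+u. k (y,x,v,u) \<partial>lborel \<partial>lborel \<partial>lborel \<partial>lborel)"
    by (intro nn_integral_cong lborel_pair.Fubini') measurable
  also have "\<dots> = (\<integral>\<^sup>+y. \<integral>\<^sup>+x. \<integral>\<^sup>+v. \<integral>\<^sup>+u. k (y,x,v,u) \<partial>lborel \<partial>lborel \<partial>lborel \<partial>lborel)"
    by (rule lborel_pair.Fubini') measurable
  also have "\<dots> = (\<integral>\<^sup>+p. k p \<partial>lborel)"
    by (subst iter4) simp_all
  finally show ?thesis .
qed




lemma cov_sym: "fbm_cov H x y = fbm_cov H y x"
  unfolding fbm_cov_def by (simp add: abs_minus_commute add.commute)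

lemma cov_nonneg:
  assumes "0 \<le> x" "0 \<le> y" "0 < H"
  shows "0 \<le> fbm_cov H x y"
proof -
  have "\<bar>x - y\<bar> powr (2*H) \<le> x powr (2*H) + y powr (2*H)"
  proof (cases "x \<le> y")
    case True
    then have "\<bar>x - y\<bar> \<le> y" using assms by auto
    then have "\<bar>x - y\<bar> powr (2*H) \<le> y powr (2*H)" using assms by (intro powr_mono2) auto
    then show ?thesis using powr_ge_zero[of x "2*H"] powr_ge_zero[of y "2*H"] by linarith
  next
    case False
    then have "\<bar>x - y\<bar> \<le> x" using assms by auto
    then have "\<bar>x - y\<bar> powr (2*H) \<le> x powr (2*H)" using assms by (intro powr_mono2) auto
    then show ?thesis using powr_ge_zero[of x "2*H"] powr_ge_zero[of y "2*H"] by linarith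
  qed
  then show ?thesis unfolding fbm_cov_def by simp
qed

lemma diff_pow_le:
  fixes s t p :: real
  assumes "0 < s" "s \<le> t" "1 \<le> p"
  shows "t powr p - (t - s) powr p \<le> p * s * t powr (p - 1)"
proof (cases "s = t")
  case True
  have "t powr p = t * t powr (p - 1)" using assms
    by (simp add: powr_diff)
  then have "t powr p \<le> p * t * t powr (p - 1)" using assms
    by (simp add: mult_right_mono)
  with True show ?thesis by simp
next
  case False
  then have lt: "t - s < t" "0 < t - s" using assms by auto
  have der: "\<And>z. t - s \<le> z \<Longrightarrow> z \<le> t \<Longrightarrow> ((\<lambda>z. z powr p) has_real_derivative p * z powr (p - 1)) (at z)"
    using lt by (intro has_real_derivative_powr) auto
  obtain z where z: "t - s < z" "z < t" "t powr p - (t - s) powr p = (t - (t - s)) * (p * z powr (p - 1))"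
    using MVT2[OF lt(1) der] by blast
  have "z powr (p - 1) \<le> t powr (p - 1)" using z lt assms by (intro powr_mono2) auto
  then have "p * z powr (p - 1) \<le> p * t powr (p - 1)" using assms by (intro mult_left_mono) auto
  then show ?thesis using z assms by (simp add: mult.assoc mult_left_mono)
qed

lemma cov_le:
  assumes "0 < s" "s \<le> t" "1/2 < H" "H < 1"
  shows "fbm_cov H s t \<le> 2 * s * t powr (2*H-1)"
proof -
  have d: "t powr (2*H) - (t - s) powr (2*H) \<le> (2*H) * s * t powr (2*H - 1)"
    by (rule diff_pow_le) (use assms in auto)
  have "s powr (2*H) = s * s powr (2*H - 1)" using assms by (simp add: powr_diff)
  also have "\<dots> \<le> s * t powr (2*H - 1)" using assms by (intro mult_left_mono powr_mono2) auto
  finally have e: "s powr (2*H) \<le> s * t powr (2*H - 1)" .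
  have "0 \<le> s * t powr (2*H - 1)" using assms by simp
  moreover have "\<bar>s - t\<bar> = t - s" using assms by simp
  moreover have "(2*H) * s * t powr (2*H-1) \<le> 2 * (s * t powr (2*H-1))"
    using assms \<open>0 \<le> s * t powr (2*H - 1)\<close> by (simp add: mult.assoc mult_right_mono)
  ultimately show ?thesis unfolding fbm_cov_def using d e
    by (simp add: mult.assoc)
qed

lemma F_le:
  assumes "0 < x" "0 < y" "1/2 < H" "H < 1"
  shows "(x*y) powr (-2*H) * fbm_cov H x y \<le> 2 * (x powr (-(1+H)/2) * y powr ((1-3*H)/2))"
proof -
  obtain lx ly where x: "x = exp lx" and y: "y = exp ly" using assms by (metis exp_ln)
  show ?thesis
  proof (cases "x \<le> y")
    case True
    have "(x*y) powr (-2*H) * fbm_cov H x y \<le> (x*y) powr (-2*H) * (2 * x * y powr (2*H-1))"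
      using cov_le[OF assms(1) True assms(3,4)] by (intro mult_left_mono) auto
    also have "\<dots> = 2 * exp ((1 - 2*H) * lx - ly)"
      unfolding x y by (simp add: powr_def exp_add[symmetric] mult_exp_exp algebra_simps)
    also have "\<dots> \<le> 2 * exp ((-(1+H)/2) * lx + ((1-3*H)/2) * ly)"
    proof -
      have "lx \<le> ly" using True x y by simp
      then have "(3*(1-H)/2) * lx \<le> (3*(1-H)/2) * ly" using assms by (intro mult_left_mono) auto
      moreover have "(-(1+H)/2 * lx + (1-3*H)/2 * ly) - ((1 - 2*H) * lx - ly) = (3*(1-H)/2) * ly - (3*(1-H)/2) * lx"
        by (simp add: field_simps)
      ultimately have "(1 - 2*H) * lx - ly \<le> (-(1+H)/2) * lx + ((1-3*H)/2) * ly"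
        by linarith
      then show ?thesis by simp
    qed
    also have "\<dots> = 2 * (x powr (-(1+H)/2) * y powr ((1-3*H)/2))"
      unfolding x y by (simp add: powr_def mult_exp_exp)
    finally show ?thesis .
  next
    case False
    then have yx: "y \<le> x" by simp
    have "(x*y) powr (-2*H) * fbm_cov H x y \<le> (x*y) powr (-2*H) * (2 * y * x powr (2*H-1))"
      using cov_le[OF assms(2) yx assms(3,4)] cov_sym[of H x y] by (intro mult_left_mono) auto
    also have "\<dots> = 2 * exp ((1 - 2*H) * ly - lx)"
      unfolding x y by (simp add: powr_def exp_add[symmetric] mult_exp_exp algebra_simps)
    also have "\<dots> \<le> 2 * exp ((-(1+H)/2) * lx + ((1-3*H)/2) * ly)"
    proof -
      have "ly \<le> lx" using yx x y by simp
      then have "((1-H)/2) * ly \<le> ((1-H)/2) * lx" using assms by (intro mult_left_mono) auto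
      moreover have "(-(1+H)/2 * lx + (1-3*H)/2 * ly) - ((1 - 2*H) * ly - lx) = ((1-H)/2) * lx - ((1-H)/2) * ly"
        by (simp add: field_simps)
      ultimately have "(1 - 2*H) * ly - lx \<le> (-(1+H)/2) * lx + ((1-3*H)/2) * ly"
        by linarith
      then show ?thesis by simp
    qed
    also have "\<dots> = 2 * (x powr (-(1+H)/2) * y powr ((1-3*H)/2))"
      unfolding x y by (simp add: powr_def mult_exp_exp)
    finally show ?thesis .
  qed
qed




lemma half_pow_neg:
  fixes a z w :: real assumes "a \<le> 0" "0 < w" "w/2 \<le> z"
  shows "z powr a \<le> 2 powr (-a) * w powr a"
proof -
  have "z powr a \<le> (w/2) powr a" using assms by (auto intro!: powr_mono2')
  also have "\<dots> = 2 powr (-a) * w powr a"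
  proof -
    have "(w/2) powr a = w powr a / 2 powr a" using assms by (simp add: powr_divide)
    moreover have "2 powr (-a) = 1 / 2 powr a" by (rule powr_minus_divide)
    ultimately show ?thesis by simp
  qed
  finally show ?thesis .
qed

lemma comb2: "B*C = J \<Longrightarrow> F*G = J \<Longrightarrow> A*B*(C/D) + E*F*(G/I) = (A/D + E/I) * (J::real)"
proof -
  assume h: "B*C = J" "F*G = J"
  have "A*B*(C/D) + E*F*(G/I) = A/D*(B*C) + E/I*(F*G)" by (simp add: divide_inverse ac_simps)
  also have "\<dots> = (A/D + E/I) * J" unfolding h by (simp only: distrib_right)
  finally show ?thesis .
qed

lemma comb3: "B*C = J \<Longrightarrow> F*G = J \<Longrightarrow>
  A*B*(C/D) + E*F*(G/I) + E*F*(G/I) + A*(-J/L) = (A/D + E*(2/I) + A/(-L)) * (J::real)"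
proof -
  assume h: "B*C = J" "F*G = J"
  have "A*B*(C/D) + E*F*(G/I) + E*F*(G/I) + A*(-J/L) = A/D*(B*C) + E*(2/I)*(F*G) + A/(-L)*J"
    by (simp add: divide_inverse ac_simps)
  also have "\<dots> = (A/D + E*(2/I) + A/(-L)) * J" unfolding h by (simp only: distrib_right)
  finally show ?thesis .
qed

lemma Lu:
  fixes a c x :: real
  assumes c: "c > -1" "c \<le> 0" and a: "a > -1" "a \<le> 0" and x: "x > 0"
  shows "(\<integral>\<^sup>+u. ennreal (u powr c * \<bar>x - u\<bar> powr a) * indicator {0..x} u \<partial>lborel)
     \<le> ennreal ((2 powr (-a) / (c+1) + 2 powr (-c) / (a+1)) * x powr (c+a+1))"
proof -
  have pt: "ennreal (u powr c * \<bar>x - u\<bar> powr a) * indicator {0..x} u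
     \<le> ennreal (2 powr (-a) * x powr a) * (ennreal (u powr c) * indicator {0..x} u)
      + ennreal (2 powr (-c) * x powr c) * (ennreal (\<bar>x - u\<bar> powr a) * indicator {0..x} u)" for u
  proof (cases "u \<in> {0..x}")
    case True
    have "u powr c * \<bar>x - u\<bar> powr a \<le> 2 powr (-a) * x powr a * u powr c + 2 powr (-c) * x powr c * \<bar>x - u\<bar> powr a"
    proof (cases "u \<le> x/2")
      case True
      have "\<bar>x - u\<bar> powr a \<le> 2 powr (-a) * x powr a"
        by (rule half_pow_neg) (use True x a in auto)
      then have "u powr c * \<bar>x - u\<bar> powr a \<le> u powr c * (2 powr (-a) * x powr a)"
        by (intro mult_left_mono) auto
      moreover have "0 \<le> 2 powr (-c) * x powr c * \<bar>x - u\<bar> powr a" by simp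
      moreover have "u powr c * (2 powr (-a) * x powr a) = 2 powr (-a) * x powr a * u powr c" by simp
      ultimately show ?thesis by linarith
    next
      case False
      have "u powr c \<le> 2 powr (-c) * x powr c"
        by (rule half_pow_neg) (use False x c in auto)
      then have "u powr c * \<bar>x - u\<bar> powr a \<le> (2 powr (-c) * x powr c) * \<bar>x - u\<bar> powr a"
        by (intro mult_right_mono) auto
      moreover have "0 \<le> 2 powr (-a) * x powr a * u powr c" by simp
      ultimately show ?thesis by linarith
    qed
    then show ?thesis using True
      by (simp add: ennreal_mult'[symmetric] ennreal_plus[symmetric] del: ennreal_plus)
  qed simp
  have "(\<integral>\<^sup>+u. ennreal (u powr c * \<bar>x - u\<bar> powr a) * indicator {0..x} u \<partial>lborel)
     \<le> (\<integral>\<^sup>+u. ennreal (2 powr (-a) * x powr a) * (ennreal (u powr c) * indicator {0..x} u)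
      + ennreal (2 powr (-c) * x powr c) * (ennreal (\<bar>x - u\<bar> powr a) * indicator {0..x} u) \<partial>lborel)"
    by (intro nn_integral_mono pt)
  also have "\<dots> = ennreal (2 powr (-a) * x powr a) * (\<integral>\<^sup>+u. ennreal (u powr c) * indicator {0..x} u \<partial>lborel)
      + ennreal (2 powr (-c) * x powr c) * (\<integral>\<^sup>+u. ennreal (\<bar>x - u\<bar> powr a) * indicator {0..x} u \<partial>lborel)"
    by (subst nn_integral_add; simp add: nn_integral_cmult)
  also have "\<dots> = ennreal (2 powr (-a) * x powr a * (x powr (c+1) / (c+1)) + 2 powr (-c) * x powr c * (x powr (a+1) / (a+1)))"
    using x a c by (simp add: P0 Pref ennreal_mult'[symmetric] ennreal_plus[symmetric] del: ennreal_plus)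
  also have "\<dots> = ennreal ((2 powr (-a) / (c+1) + 2 powr (-c) / (a+1)) * x powr (c+a+1))"
  proof -
    have "x powr a * x powr (c+1) = x powr (c+a+1)" "x powr c * x powr (a+1) = x powr (c+a+1)"
      by (simp_all add: powr_add[symmetric] algebra_simps)
    then show ?thesis by (simp only: comb2)
  qed
  finally show ?thesis .
qed

lemma Lv:
  fixes a d y :: real
  assumes d: "d > -1" "d \<le> 0" and a: "a > -1" "a \<le> 0" and da: "d + a < -1" and y: "y > 0"
  shows "(\<integral>\<^sup>+v. ennreal (v powr d * \<bar>y - v\<bar> powr a) * indicator {0..} v \<partial>lborel)
     \<le> ennreal ((2 powr (-a) / (d+1) + 2 powr (-d) * (2 / (a+1)) + 2 powr (-a) / (-(d+a+1))) * y powr (d+a+1))"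
proof -
  have pt: "ennreal (v powr d * \<bar>y - v\<bar> powr a) * indicator {0..} v
     \<le> ennreal (2 powr (-a) * y powr a) * (ennreal (v powr d) * indicator {0..y} v)
      + ennreal (2 powr (-d) * y powr d) * (ennreal (\<bar>y - v\<bar> powr a) * indicator {0..y} v)
      + ennreal (2 powr (-d) * y powr d) * (ennreal (\<bar>y - v\<bar> powr a) * indicator {y..2*y} v)
      + ennreal (2 powr (-a)) * (ennreal (v powr (d+a)) * indicator {y..} v)" for v
  proof (cases "0 \<le> v")
    case v0: True
    have "v powr d * \<bar>y - v\<bar> powr a \<le> 2 powr (-a) * y powr a * (v powr d * indicator {0..y} v)
      + 2 powr (-d) * y powr d * (\<bar>y - v\<bar> powr a * indicator {0..y} v)
      + 2 powr (-d) * y powr d * (\<bar>y - v\<bar> powr a * indicator {y..2*y} v)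
      + 2 powr (-a) * (v powr (d+a) * indicator {y..} v)"
    proof -
      have nn: "0 \<le> 2 powr (-a) * y powr a * (v powr d * indicator {0..y} v)"
        "0 \<le> 2 powr (-d) * y powr d * (\<bar>y - v\<bar> powr a * indicator {0..y} v)"
        "0 \<le> 2 powr (-d) * y powr d * (\<bar>y - v\<bar> powr a * indicator {y..2*y} v)"
        "0 \<le> 2 powr (-a) * (v powr (d+a) * indicator {y..} v)"
        by (simp_all add: indicator_def)
      consider "v \<le> y/2" | "y/2 \<le> v \<and> v \<le> y" | "y \<le> v \<and> v \<le> 2*y" | "2*y \<le> v" by linarith
      then show ?thesis
      proof cases
        case 1
        have "\<bar>y - v\<bar> powr a \<le> 2 powr (-a) * y powr a"
          by (rule half_pow_neg) (use 1 y a in auto)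
        then have "v powr d * \<bar>y - v\<bar> powr a \<le> v powr d * (2 powr (-a) * y powr a)"
          by (intro mult_left_mono) auto
        moreover have "indicator {0..y} v = (1::real)" using 1 v0 y by simp
        then have "2 powr (-a) * y powr a * (v powr d * indicator {0..y} v) = v powr d * (2 powr (-a) * y powr a)" by simp
        ultimately show ?thesis using nn by linarith
      next
        case 2
        have "v powr d \<le> 2 powr (-d) * y powr d"
          by (rule half_pow_neg) (use 2 y d in auto)
        then have "v powr d * \<bar>y - v\<bar> powr a \<le> (2 powr (-d) * y powr d) * \<bar>y - v\<bar> powr a"
          by (intro mult_right_mono) auto
        moreover have "indicator {0..y} v = (1::real)" using 2 v0 y by simp
        then have "2 powr (-d) * y powr d * (\<bar>y - v\<bar> powr a * indicator {0..y} v) = (2 powr (-d) * y powr d) * \<bar>y - v\<bar> powr a" by simp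
        ultimately show ?thesis using nn by linarith
      next
        case 3
        have "v powr d \<le> 2 powr (-d) * y powr d"
          by (rule half_pow_neg) (use 3 y d in auto)
        then have "v powr d * \<bar>y - v\<bar> powr a \<le> (2 powr (-d) * y powr d) * \<bar>y - v\<bar> powr a"
          by (intro mult_right_mono) auto
        moreover have "indicator {y..2*y} v = (1::real)" using 3 v0 y by simp
        then have "2 powr (-d) * y powr d * (\<bar>y - v\<bar> powr a * indicator {y..2*y} v) = (2 powr (-d) * y powr d) * \<bar>y - v\<bar> powr a" by simp
        ultimately show ?thesis using nn by linarith
      next
        case 4
        have "\<bar>y - v\<bar> powr a \<le> 2 powr (-a) * v powr a"
          by (rule half_pow_neg) (use 4 y a in auto)
        then have "v powr d * \<bar>y - v\<bar> powr a \<le> v powr d * (2 powr (-a) * v powr a)"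
          by (intro mult_left_mono) auto
        also have "\<dots> = 2 powr (-a) * v powr (d+a)" by (simp add: powr_add)
        finally have "v powr d * \<bar>y - v\<bar> powr a \<le> 2 powr (-a) * v powr (d+a)" .
        moreover have "indicator {y..} v = (1::real)" using 4 v0 y by simp
        then have "2 powr (-a) * (v powr (d+a) * indicator {y..} v) = 2 powr (-a) * v powr (d+a)" by simp
        ultimately show ?thesis using nn by linarith
      qed
    qed
    then show ?thesis using v0
      by (simp add: indicator_mult_ennreal ennreal_mult'[symmetric] ennreal_plus[symmetric] ennreal_indicator[symmetric] del: ennreal_plus)
  qed simp
  have "(\<integral>\<^sup>+v. ennreal (v powr d * \<bar>y - v\<bar> powr a) * indicator {0..} v \<partial>lborel)
     \<le> (\<integral>\<^sup>+v. ennreal (2 powr (-a) * y powr a) * (ennreal (v powr d) * indicator {0..y} v)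
      + ennreal (2 powr (-d) * y powr d) * (ennreal (\<bar>y - v\<bar> powr a) * indicator {0..y} v)
      + ennreal (2 powr (-d) * y powr d) * (ennreal (\<bar>y - v\<bar> powr a) * indicator {y..2*y} v)
      + ennreal (2 powr (-a)) * (ennreal (v powr (d+a)) * indicator {y..} v) \<partial>lborel)"
    by (intro nn_integral_mono pt)
  also have "\<dots> = ennreal (2 powr (-a) * y powr a) * (\<integral>\<^sup>+v. ennreal (v powr d) * indicator {0..y} v \<partial>lborel)
      + ennreal (2 powr (-d) * y powr d) * (\<integral>\<^sup>+v. ennreal (\<bar>y - v\<bar> powr a) * indicator {0..y} v \<partial>lborel)
      + ennreal (2 powr (-d) * y powr d) * (\<integral>\<^sup>+v. ennreal (\<bar>y - v\<bar> powr a) * indicator {y..2*y} v \<partial>lborel)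
      + ennreal (2 powr (-a)) * (\<integral>\<^sup>+v. ennreal (v powr (d+a)) * indicator {y..} v \<partial>lborel)"
    by (simp add: nn_integral_add nn_integral_cmult)
  also have "\<dots> = ennreal (2 powr (-a) * y powr a * (y powr (d+1) / (d+1))
      + 2 powr (-d) * y powr d * (y powr (a+1) / (a+1))
      + 2 powr (-d) * y powr d * (y powr (a+1) / (a+1))
      + 2 powr (-a) * (-(y powr (d+a+1)) / (d+a+1)))"
  proof -
    have "0 \<le> -(y powr (d+a+1)) / (d+a+1)" by (rule divide_nonpos_neg) (use da in auto)
    then have "y powr (d+a+1) / (d+a+1) \<le> 0" by simp
    then have "2 powr (-a) * (y powr (d+a+1) / (d+a+1)) \<le> 0" by (intro mult_nonneg_nonpos) auto
    then have "0 \<le> -(2 powr (-a) * y powr (d+a+1) / (d+a+1))" by simp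
    then show ?thesis
      using y a d da by (simp add: P0 Pref Pshift Pinf ennreal_mult'[symmetric] ennreal_plus[symmetric] del: ennreal_plus)
  qed
  also have "\<dots> = ennreal ((2 powr (-a) / (d+1) + 2 powr (-d) * (2 / (a+1)) + 2 powr (-a) / (-(d+a+1))) * y powr (d+a+1))"
  proof -
    have "y powr a * y powr (d+1) = y powr (d+a+1)" "y powr d * y powr (a+1) = y powr (d+a+1)"
      by (simp_all add: powr_add[symmetric] algebra_simps)
    then show ?thesis by (simp only: comb3)
  qed
  finally show ?thesis .
qed




definition ig :: "real \<Rightarrow> r4 \<Rightarrow> real" where
  "ig H p = (case p of (x, y, u, v) \<Rightarrow>
         (x * y * u * v) powr (-2*H) * fbm_cov H x y * fbm_cov H u v
         * \<bar>x - u\<bar> powr (2*H - 2) * \<bar>y - v\<bar> powr (2*H - 2))"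

lemma meas_ig: "(\<lambda>p. ennreal (ig H p)) \<in> borel_measurable B4"
  unfolding ig_def fbm_cov_def case_prod_beta by measurable

lemma meas_ig2: "(\<lambda>p. ennreal (ig H p) * indicator ({a..b} \<times> {a..b} \<times> {a..b} \<times> {a..b}) p * indicator {p. fst (snd p) \<le> fst p \<and> fst (snd (snd p)) \<le> fst p \<and> snd (snd (snd p)) \<le> fst p} p) \<in> borel_measurable B4"
  using meas_ig[of H] by measurable

lemma lnT:
  fixes K T :: real assumes "T > 1" "K \<ge> 0"
  shows "(\<integral>\<^sup>+x. ennreal (K / x) * indicator {1/T..1} x \<partial>lborel) = ennreal (K * ln T)"
proof -
  have pos: "0 < x" if "x \<in> {1/T..1}" for x
  proof -
    have "0 < 1/T" using assms by simp
    then show ?thesis using that by (meson atLeastAtMost_iff less_le_trans)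
  qed
  have "((\<lambda>x. K / x) has_integral (K * ln 1 - K * ln (1/T))) {1/T..1}"
  proof (rule fundamental_theorem_of_calculus)
    show "1/T \<le> 1" using assms by simp
    show "((\<lambda>x. K * ln x) has_vector_derivative K / x) (at x within {1/T..1})" if "x \<in> {1/T..1}" for x
      using pos[OF that] unfolding has_real_derivative_iff_has_vector_derivative[symmetric]
      by (auto intro!: derivative_eq_intros simp: field_simps)
  qed
  then have "((\<lambda>x. K / x) has_integral (K * ln T)) {1/T..1}" using assms by (simp add: ln_div)
  then show ?thesis using pos assms(2) by (intro nn_integral_has_integral_lebesgue') (auto intro!: divide_nonneg_pos)
qed




lemma ig_sigma: "ig H (case p of (x,y,u,v) \<Rightarrow> (y,x,v,u)) = ig H p"
proof -
  obtain x y u v where p: "p = (x,y,u,v)" by (cases p) auto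
  show ?thesis unfolding p ig_def
    by (simp add: cov_sym[of H y x] cov_sym[of H v u] ac_simps)
qed

lemma ig_tau: "ig H (case p of (x,y,u,v) \<Rightarrow> (u,v,x,y)) = ig H p"
proof -
  obtain x y u v where p: "p = (x,y,u,v)" by (cases p) auto
  show ?thesis unfolding p ig_def
    by (simp add: abs_minus_commute ac_simps)
qed

lemma ig_le:
  assumes H1: "1/2 < H" and H2: "H < 1" and pos: "0 < x" "0 < y" "0 < u" "0 < v"
  shows "ig H (x,y,u,v) \<le> 4 * x powr (-(1+H)/2) * y powr ((1-3*H)/2)
     * (u powr (-(1+H)/2) * \<bar>x - u\<bar> powr (2*H-2)) * (v powr ((1-3*H)/2) * \<bar>y - v\<bar> powr (2*H-2))"
proof -
  define F where "F = (\<lambda>x y. (x*y) powr (-2*H) * fbm_cov H x y)"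
  define A where "A = \<bar>x - u\<bar> powr (2*H-2)"
  define B where "B = \<bar>y - v\<bar> powr (2*H-2)"
  have "(x * y * u * v) powr (-2*H) = (x * y) powr (-2*H) * (u * v) powr (-2*H)"
    using pos by (simp add: powr_mult[symmetric] mult.assoc)
  then have eq: "ig H (x,y,u,v) = F x y * F u v * A * B"
    unfolding ig_def F_def A_def B_def by (simp add: ac_simps)
  have F1: "0 \<le> F x y" "F x y \<le> 2 * (x powr (-(1+H)/2) * y powr ((1-3*H)/2))"
    unfolding F_def using pos H1 H2 F_le[OF pos(1,2) H1 H2] by (auto intro!: mult_nonneg_nonneg cov_nonneg)
  have F2: "0 \<le> F u v" "F u v \<le> 2 * (u powr (-(1+H)/2) * v powr ((1-3*H)/2))"
    unfolding F_def using pos H1 H2 F_le[OF pos(3,4) H1 H2] by (auto intro!: mult_nonneg_nonneg cov_nonneg)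
  have AB: "0 \<le> A" "0 \<le> B" unfolding A_def B_def by auto
  have "F x y * F u v * A * B \<le> (2 * (x powr (-(1+H)/2) * y powr ((1-3*H)/2))) * (2 * (u powr (-(1+H)/2) * v powr ((1-3*H)/2))) * A * B"
    using F1 F2 AB by (intro mult_right_mono mult_mono) auto
  also have "\<dots> = 4 * x powr (-(1+H)/2) * y powr ((1-3*H)/2)
     * (u powr (-(1+H)/2) * A) * (v powr ((1-3*H)/2) * B)" by (simp add: ac_simps)
  finally show ?thesis unfolding eq A_def B_def .
qed




lemma four_times: "X + X + X + X = 4 * (X::ennreal)"
proof -
  have "4 * X = (2 + 2) * X" by simp
  also have "\<dots> = 2*X + 2*X" by (rule distrib_right)
  finally show ?thesis by (simp add: mult_2 add.assoc)
qed

lemma B4_eq: "B4 = borel" by (simp add: borel_prod)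

lemma B4_lborel: "f \<in> borel_measurable B4 \<Longrightarrow> (f :: r4 \<Rightarrow> ennreal) \<in> borel_measurable lborel"
  unfolding B4_eq by simp

lemma main_bound:
  fixes H T :: real assumes H1: "1/2 < H" and H2: "H < 1" and T: "T > 1"
  defines "a \<equiv> 2*H-2" and "c \<equiv> -(1+H)/2" and "d \<equiv> (1-3*H)/2"
  defines "K1 \<equiv> 2 powr (-a) / (d+1) + 2 powr (-d) * (2 / (a+1)) + 2 powr (-a) / (-(d+a+1))"
  defines "K2 \<equiv> 2 powr (-a) / (c+1) + 2 powr (-c) / (a+1)"
  defines "K3 \<equiv> 4 * K2 * K1 / (2*d+a+2)"
  shows "(\<integral>\<^sup>+p. ennreal (ig H p) * indicator ({1/T..1} \<times> {1/T..1} \<times> {1/T..1} \<times> {1/T..1}) p \<partial>lborel)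
     \<le> ennreal (4 * K3 * ln T)"
proof -
  define D where "D = ({1/T..1} \<times> {1/T..1} \<times> {1/T..1} \<times> {1/T..1} :: r4 set)"
  define g where "g p = ennreal (ig H p) * indicator D p" for p
  define Ax where "Ax = {p::r4. fst (snd p) \<le> fst p \<and> fst (snd (snd p)) \<le> fst p \<and> snd (snd (snd p)) \<le> fst p}"
  define k where "k p = g p * indicator Ax p" for p
  define \<sigma> where "\<sigma> = (\<lambda>p::r4. case p of (x,y,u,v) \<Rightarrow> (y,x,v,u))"
  define \<tau> where "\<tau> = (\<lambda>p::r4. case p of (x,y,u,v) \<Rightarrow> (u,v,x,y))"
  have Tpos: "0 < 1/T" using T by simp
  have gm[measurable]: "g \<in> borel_measurable B4"
    unfolding g_def D_def using meas_ig[of H] by measurable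
  have km[measurable]: "k \<in> borel_measurable B4"
    unfolding k_def Ax_def by measurable
  have ks[measurable]: "(\<lambda>p. k (\<sigma> p)) \<in> borel_measurable B4"
    unfolding \<sigma>_def case_prod_beta by measurable
  have kt[measurable]: "(\<lambda>p. k (\<tau> p)) \<in> borel_measurable B4"
    unfolding \<tau>_def case_prod_beta by measurable
  have kst[measurable]: "(\<lambda>p. k (\<sigma> (\<tau> p))) \<in> borel_measurable B4"
    unfolding \<sigma>_def \<tau>_def case_prod_beta by measurable
  have gs: "g (\<sigma> p) = g p" "g (\<tau> p) = g p" for p
    unfolding g_def \<sigma>_def \<tau>_def D_def using ig_sigma[of H p] ig_tau[of H p]
    by (auto split: prod.splits simp: indicator_def)
  have split: "g p \<le> k p + k (\<sigma> p) + k (\<tau> p) + k (\<sigma> (\<tau> p))" for p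
  proof -
    obtain x y u v where p: "p = (x,y,u,v)" by (cases p) auto
    have "k (\<sigma> p) = g p * indicator {p. x \<le> y \<and> v \<le> y \<and> u \<le> y} p"
         "k (\<tau> p) = g p * indicator {p. v \<le> u \<and> x \<le> u \<and> y \<le> u} p"
         "k (\<sigma> (\<tau> p)) = g p * indicator {p. u \<le> v \<and> y \<le> v \<and> x \<le> v} p"
         "k p = g p * indicator {p. y \<le> x \<and> u \<le> x \<and> v \<le> x} p"
      unfolding k_def using gs[of p] gs[of "\<tau> p"] by (auto simp: p \<sigma>_def \<tau>_def Ax_def indicator_def)
    then show ?thesis
      by (cases "y \<le> x \<and> u \<le> x \<and> v \<le> x"; cases "x \<le> y \<and> v \<le> y \<and> u \<le> y"; cases "v \<le> u \<and> x \<le> u \<and> y \<le> u")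
         (auto simp: indicator_def)
  qed
  have e1: "(\<integral>\<^sup>+p. k (\<sigma> p) \<partial>lborel) = (\<integral>\<^sup>+p. k p \<partial>lborel)"
    unfolding \<sigma>_def by (rule inv_sigma) (rule km)
  have e2: "(\<integral>\<^sup>+p. k (\<tau> p) \<partial>lborel) = (\<integral>\<^sup>+p. k p \<partial>lborel)"
    unfolding \<tau>_def by (rule inv_tau) (rule km)
  have e3: "(\<integral>\<^sup>+p. k (\<sigma> (\<tau> p)) \<partial>lborel) = (\<integral>\<^sup>+p. k p \<partial>lborel)"
    using inv_tau[OF ks] e1 unfolding \<tau>_def by simp
  have step1: "(\<integral>\<^sup>+p. g p \<partial>lborel) \<le> 4 * (\<integral>\<^sup>+p. k p \<partial>lborel)"
  proof -
    have "(\<integral>\<^sup>+p. g p \<partial>lborel) \<le> (\<integral>\<^sup>+p. k p + k (\<sigma> p) + k (\<tau> p) + k (\<sigma> (\<tau> p)) \<partial>lborel)"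
      by (intro nn_integral_mono split)
    also have "\<dots> = (\<integral>\<^sup>+p. k p \<partial>lborel) + (\<integral>\<^sup>+p. k (\<sigma> p) \<partial>lborel) + (\<integral>\<^sup>+p. k (\<tau> p) \<partial>lborel) + (\<integral>\<^sup>+p. k (\<sigma> (\<tau> p)) \<partial>lborel)"
      using B4_lborel[OF km] B4_lborel[OF ks] B4_lborel[OF kt] B4_lborel[OF kst]
      by (simp add: nn_integral_add)
    also have "\<dots> = 4 * (\<integral>\<^sup>+p. k p \<partial>lborel)"
      unfolding e1 e2 e3 by (rule four_times)
    finally show ?thesis .
  qed
  define P where "P x = ennreal (4 * x powr c) * indicator {1/T..1} x" for x :: real
  define Q where "Q x y = ennreal (y powr d) * indicator {0..x} y" for x y :: real
  define U where "U x u = ennreal (u powr c * \<bar>x - u\<bar> powr a) * indicator {0..x} u" for x u :: real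
  define V where "V y v = ennreal (v powr d * \<bar>y - v\<bar> powr a) * indicator {0..} v" for y v :: real
  define W where "W y = ennreal (K1 * y powr (d+a+1))" for y :: real
  define Z where "Z x = ennreal (K2 * x powr (c+a+1))" for x :: real
  define Y where "Y x = ennreal (K1 * (x powr (2*d+a+2) / (2*d+a+2)))" for x :: real
  define bnd where "bnd p = (case p of (x,y,u,v) \<Rightarrow> P x * Q x y * U x u * V y v)" for p :: r4
  have bm[measurable]: "bnd \<in> borel_measurable B4"
    unfolding bnd_def P_def Q_def U_def V_def case_prod_beta indicator_def atLeastAtMost_iff atLeast_iff by measurable
  have ha: "-1 < a" "a \<le> 0" and hc: "-1 < c" "c \<le> 0" and hd: "-1 < d" "d \<le> 0" "d + a < -1"
    and h2: "-1 < 2*d+a+1" "0 < 2*d+a+2"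
    using H1 H2 unfolding a_def c_def d_def by (auto simp: field_simps)
  have K1pos: "0 \<le> K1" unfolding K1_def using ha hd by (auto intro!: add_nonneg_nonneg divide_nonneg_pos)
  have K2pos: "0 \<le> K2" unfolding K2_def using ha hc by (auto intro!: add_nonneg_nonneg divide_nonneg_pos)
  have kb: "k p \<le> bnd p" for p
  proof -
    obtain x y u v where p: "p = (x,y,u,v)" by (cases p) auto
    show ?thesis
    proof (cases "p \<in> D \<inter> Ax")
      case True
      then have r: "1/T \<le> x" "x \<le> 1" "1/T \<le> y" "y \<le> 1" "1/T \<le> u" "u \<le> 1" "1/T \<le> v" "v \<le> 1"
        "y \<le> x" "u \<le> x" "v \<le> x"
        by (auto simp: p D_def Ax_def)
      then have pos: "0 < x" "0 < y" "0 < u" "0 < v" using Tpos by linarith+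
      have "k p = ennreal (ig H (x,y,u,v))" using True by (simp add: k_def g_def p)
      also have "\<dots> \<le> ennreal (4 * x powr c * y powr d * (u powr c * \<bar>x - u\<bar> powr a) * (v powr d * \<bar>y - v\<bar> powr a))"
        by (rule ennreal_leI) (unfold a_def c_def d_def, rule ig_le[OF H1 H2 pos])
      also have "\<dots> = bnd p"
        using r pos by (simp add: bnd_def p P_def Q_def U_def V_def ennreal_mult[symmetric] mult.assoc)
      finally show ?thesis .
    next
      case False
      then have "k p = 0" by (auto simp: k_def g_def)
      then show ?thesis by simp
    qed
  qed
  have i1: "(\<integral>\<^sup>+v. P x * Q x y * U x u * V y v \<partial>lborel) \<le> P x * Q x y * U x u * W y" for x y u
  proof -
    have "(\<integral>\<^sup>+v. P x * Q x y * U x u * V y v \<partial>lborel) = P x * Q x y * U x u * (\<integral>\<^sup>+v. V y v \<partial>lborel)"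
      by (rule nn_integral_cmult) (unfold V_def, measurable)
    also have "\<dots> \<le> P x * Q x y * U x u * W y"
    proof (cases "0 < y")
      case True
      have "(\<integral>\<^sup>+v. V y v \<partial>lborel) \<le> W y"
        unfolding V_def W_def K1_def by (rule Lv[OF hd(1,2) ha hd(3) True])
      then show ?thesis by (rule mult_left_mono) simp
    next
      case False
      then have "Q x y = 0" by (cases "y = 0") (auto simp: Q_def indicator_def)
      then show ?thesis by simp
    qed
    finally show ?thesis .
  qed
  have i2: "(\<integral>\<^sup>+u. P x * Q x y * U x u * W y \<partial>lborel) \<le> P x * Q x y * W y * Z x" for x y
  proof -
    have "(\<integral>\<^sup>+u. P x * Q x y * U x u * W y \<partial>lborel) = (\<integral>\<^sup>+u. (P x * Q x y * W y) * U x u \<partial>lborel)"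
      by (simp add: ac_simps)
    also have "\<dots> = P x * Q x y * W y * (\<integral>\<^sup>+u. U x u \<partial>lborel)"
      by (rule nn_integral_cmult) (unfold U_def indicator_def atLeastAtMost_iff, measurable)
    also have "\<dots> \<le> P x * Q x y * W y * Z x"
    proof (cases "0 < x")
      case True
      have "(\<integral>\<^sup>+u. U x u \<partial>lborel) \<le> Z x"
        unfolding U_def Z_def K2_def by (rule Lu[OF hc ha True])
      then show ?thesis by (rule mult_left_mono) simp
    next
      case False
      then have "\<not> (1/T \<le> x)" using Tpos by linarith
      then have "P x = 0" by (simp add: P_def indicator_def)
      then show ?thesis by simp
    qed
    finally show ?thesis .
  qed
  have i3: "(\<integral>\<^sup>+y. P x * Q x y * W y * Z x \<partial>lborel) \<le> P x * Z x * Y x" for x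
  proof (cases "0 < x")
    case True
    have eq: "P x * Q x y * W y * Z x = (P x * Z x * ennreal K1) * (ennreal (y powr (2*d+a+1)) * indicator {0..x} y)" for y
    proof -
      have "y powr d * y powr (d+a+1) = y powr (2*d+a+1)" by (simp add: powr_add[symmetric] algebra_simps)
      then have "ennreal (y powr d) * ennreal (K1 * y powr (d+a+1)) = ennreal K1 * ennreal (y powr (2*d+a+1))"
        using K1pos by (simp add: ennreal_mult[symmetric] ac_simps)
      note f = this
      have "P x * Q x y * W y * Z x = P x * Z x * indicator {0..x} y * (ennreal (y powr d) * ennreal (K1 * y powr (d+a+1)))"
        unfolding Q_def W_def by (simp add: ac_simps)
      also have "\<dots> = P x * Z x * indicator {0..x} y * (ennreal K1 * ennreal (y powr (2*d+a+1)))"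
        by (simp only: f)
      also have "\<dots> = (P x * Z x * ennreal K1) * (ennreal (y powr (2*d+a+1)) * indicator {0..x} y)"
        by (simp add: ac_simps)
      finally show ?thesis .
    qed
    have "(\<integral>\<^sup>+y. P x * Q x y * W y * Z x \<partial>lborel) = P x * Z x * ennreal K1 * (\<integral>\<^sup>+y. ennreal (y powr (2*d+a+1)) * indicator {0..x} y \<partial>lborel)"
      unfolding eq by (rule nn_integral_cmult) measurable
    also have "(\<integral>\<^sup>+y. ennreal (y powr (2*d+a+1)) * indicator {0..x} y \<partial>lborel) = ennreal (x powr (2*d+a+1+1) / (2*d+a+1+1))"
      by (rule P0) (use h2 True in auto)
    also have "P x * Z x * ennreal K1 * ennreal (x powr (2*d+a+1+1) / (2*d+a+1+1)) = P x * Z x * Y x"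
    proof -
      have e: "2*d+a+1+1 = 2*d+a+2" by simp
      have "ennreal (K1 * (x powr (2*d+a+2) / (2*d+a+2))) = ennreal K1 * ennreal (x powr (2*d+a+2) / (2*d+a+2))"
        using K1pos h2 by (intro ennreal_mult) auto
      then show ?thesis unfolding Y_def e by (simp add: mult.assoc)
    qed
    finally show ?thesis by simp
  next
    case False
    then have "\<not> (1/T \<le> x)" using Tpos by linarith
    then have "P x = 0" by (simp add: P_def indicator_def)
    then show ?thesis by simp
  qed
  have i4: "P x * Z x * Y x = ennreal (K3 / x) * indicator {1/T..1} x" for x
  proof (cases "x \<in> {1/T..1}")
    case True
    then have xp: "0 < x" using Tpos by (meson atLeastAtMost_iff less_le_trans)
    have ex: "x powr c * x powr (c+a+1) * x powr (2*d+a+2) = x powr (-1)"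
    proof -
      have "x powr c * x powr (c+a+1) * x powr (2*d+a+2) = x powr (c + (c+a+1) + (2*d+a+2))"
        by (simp only: powr_add[symmetric])
      also have "c + (c+a+1) + (2*d+a+2) = -1" unfolding a_def c_def d_def by (simp add: field_simps)
      finally show ?thesis .
    qed
    have "4 * x powr c * (K2 * x powr (c+a+1)) * (K1 * (x powr (2*d+a+2) / (2*d+a+2)))
        = (4 * K2 * K1 / (2*d+a+2)) * (x powr c * x powr (c+a+1) * x powr (2*d+a+2))"
      by (simp add: field_simps)
    also have "\<dots> = K3 / x" unfolding ex K3_def using xp by (simp add: powr_minus_divide)
    finally have "4 * x powr c * (K2 * x powr (c+a+1)) * (K1 * (x powr (2*d+a+2) / (2*d+a+2))) = K3 / x" .
    moreover have "0 \<le> K2 * x powr (c+a+1)" "0 \<le> K1 * (x powr (2*d+a+2) / (2*d+a+2))"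
      using K1pos K2pos h2 by auto
    ultimately show ?thesis using True unfolding P_def Z_def Y_def
      by (simp add: ennreal_mult[symmetric])
  next
    case False
    then show ?thesis by (simp add: P_def)
  qed
  have "(\<integral>\<^sup>+p. k p \<partial>lborel) \<le> (\<integral>\<^sup>+p. bnd p \<partial>lborel)"
    by (intro nn_integral_mono kb)
  also have "\<dots> = (\<integral>\<^sup>+x. \<integral>\<^sup>+y. \<integral>\<^sup>+u. \<integral>\<^sup>+v. P x * Q x y * U x u * V y v \<partial>lborel \<partial>lborel \<partial>lborel \<partial>lborel)"
    by (subst iter4[OF bm]) (simp add: bnd_def)
  also have "\<dots> \<le> (\<integral>\<^sup>+x. \<integral>\<^sup>+y. \<integral>\<^sup>+u. P x * Q x y * U x u * W y \<partial>lborel \<partial>lborel \<partial>lborel)"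
    by (intro nn_integral_mono i1)
  also have "\<dots> \<le> (\<integral>\<^sup>+x. \<integral>\<^sup>+y. P x * Q x y * W y * Z x \<partial>lborel \<partial>lborel)"
    by (intro nn_integral_mono i2)
  also have "\<dots> \<le> (\<integral>\<^sup>+x. P x * Z x * Y x \<partial>lborel)"
    by (intro nn_integral_mono i3)
  also have "\<dots> = ennreal (K3 * ln T)"
    unfolding i4 by (rule lnT[OF T]) (use K1pos K2pos h2 in \<open>auto simp: K3_def intro!: divide_nonneg_pos mult_nonneg_nonneg\<close>)
  finally have step2: "(\<integral>\<^sup>+p. k p \<partial>lborel) \<le> ennreal (K3 * ln T)" .
  have "(\<integral>\<^sup>+p. g p \<partial>lborel) \<le> 4 * ennreal (K3 * ln T)"
    using step1 step2 by (meson order_trans mult_left_mono zero_le)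
  also have "\<dots> = ennreal (4 * K3 * ln T)"
    by (simp add: ennreal_mult' mult.assoc)
  finally show ?thesis unfolding g_def D_def .
qed


theorem lemma4p1:
  fixes H :: real
  assumes "1/2 < H" and "H < 1"
  shows "\<exists>K::real. 0 < K \<and> (\<forall>T::real. T > 1 \<longrightarrow>
    (\<integral>\<^sup>+ p \<in> {1/T..1} \<times> {1/T..1} \<times> {1/T..1} \<times> {1/T..1}.
       ennreal (case p of (x, y, u, v) \<Rightarrow>
         (x * y * u * v) powr (-2*H) * fbm_cov H x y * fbm_cov H u v
         * \<bar>x - u\<bar> powr (2*H - 2) * \<bar>y - v\<bar> powr (2*H - 2)) \<partial>lborel)
    \<le> ennreal (K * ln T))"
proof -
  define a where "a = 2*H-2"
  define c where "c = -(1+H)/2"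
  define d where "d = (1-3*H)/2"
  define K1 where "K1 = 2 powr (-a) / (d+1) + 2 powr (-d) * (2 / (a+1)) + 2 powr (-a) / (-(d+a+1))"
  define K2 where "K2 = 2 powr (-a) / (c+1) + 2 powr (-c) / (a+1)"
  define K3 where "K3 = 4 * K2 * K1 / (2*d+a+2)"
  have ha: "-1 < a" and hc: "-1 < c" and hd: "-1 < d" "d + a < -1" and h2: "0 < 2*d+a+2"
    using assms unfolding a_def c_def d_def by (auto simp: field_simps)
  have "0 < 2 powr (-a) / (d+1)" using hd by simp
  moreover have "0 \<le> 2 powr (-d) * (2 / (a+1)) + 2 powr (-a) / (-(d+a+1))"
    using ha hd by (auto intro!: add_nonneg_nonneg divide_nonneg_pos)
  ultimately have K1p: "0 < K1" unfolding K1_def by linarith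
  have "0 < 2 powr (-a) / (c+1)" using hc by simp
  moreover have "0 \<le> 2 powr (-c) / (a+1)" using ha by simp
  ultimately have K2p: "0 < K2" unfolding K2_def by linarith
  have K3p: "0 < K3" unfolding K3_def using K1p K2p h2 by simp
  show ?thesis
  proof (intro exI[of _ "4 * K3"] conjI allI impI)
    show "0 < 4 * K3" using K3p by simp
    fix T :: real assume T: "T > 1"
    show "(\<integral>\<^sup>+ p \<in> {1/T..1} \<times> {1/T..1} \<times> {1/T..1} \<times> {1/T..1}.
       ennreal (case p of (x, y, u, v) \<Rightarrow>
         (x * y * u * v) powr (-2*H) * fbm_cov H x y * fbm_cov H u v
         * \<bar>x - u\<bar> powr (2*H - 2) * \<bar>y - v\<bar> powr (2*H - 2)) \<partial>lborel)
    \<le> ennreal (4 * K3 * ln T)"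
      using main_bound[OF assms T] unfolding ig_def K3_def K2_def K1_def a_def c_def d_def .
  qed
qed

end
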